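(* Let $\mathcal{H}$ be an infinite dimensional complex Hilbert space and let $\phi:\mathcal{B}(\mathcal{H})\to\mathcal{B}(\mathcal{H})$ be a bijective map preserving the Douglas solution in both directions. If $P\in\mathcal{B}(\mathcal{H})$ is an orthogonal projection ($P=P^2=P^*$), then $\phi(P)$ is an orthogonal projection.
   Context: $\mathcal{B}(\mathcal{H})$ denotes the algebra of all bounded linear operators on $\mathcal{H}$. For $A,B\in\mathcal{B}(\mathcal{H})$ with $\operatorname{ran}A\subseteq\operatorname{ran}B$, the Douglas solution of $A=BX$ is the unique $D\in\mathcal{B}(\mathcal{H})$ with $BD=A$ and $\operatorname{ran}D\subseteq(\ker B)^\perp$. A map $\phi:\mathcal{B}(\mathcal{H})\to\mathcal{B}(\mathcal{H})$ preserves the Douglas solution in both directions if for all $A,B,X\in\mathcal{B}(\mathcal{H})$: $X$ is the Douglas solution of $A=BX$ if and only if $\phi(X)$ is the Douglas solution of $\phi(A)=\phi(B)Y$. *)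

theory Defs
  imports "HOL-Analysis.Analysis"
begin

class complex_hilbert = banach +
  fixes scaleC :: "complex \<Rightarrow> 'a \<Rightarrow> 'a"
    and cinner :: "'a \<Rightarrow> 'a \<Rightarrow> complex"
  assumes scaleC_add_right: "scaleC a (x + y) = scaleC a x + scaleC a y"
    and scaleC_add_left: "scaleC (a + b) x = scaleC a x + scaleC b x"
    and scaleC_scaleC: "scaleC a (scaleC b x) = scaleC (a * b) x"
    and scaleC_one: "scaleC 1 x = x"
    and scaleR_scaleC: "scaleR r x = scaleC (complex_of_real r) x"
    and cinner_add_left: "cinner (x + y) z = cinner x z + cinner y z"
    and cinner_scaleC_left: "cinner (scaleC a x) y = a * cinner x y"
    and cinner_commute: "cinner x y = cnj (cinner y x)"
    and norm_eq_sqrt_cinner: "norm x = sqrt (Re (cinner x x))"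

definition cspan :: "'a::complex_hilbert set \<Rightarrow> 'a set" where
  "cspan S = {x. \<exists>T c. finite T \<and> T \<subseteq> S \<and> x = (\<Sum>v\<in>T. scaleC (c v) v)}"

definition infinite_dim :: "'a::complex_hilbert itself \<Rightarrow> bool" where
  "infinite_dim _ \<longleftrightarrow> (\<forall>S::'a set. finite S \<longrightarrow> cspan S \<noteq> UNIV)"

definition bop :: "('a::complex_hilbert \<Rightarrow> 'a) \<Rightarrow> bool" where
  "bop T \<longleftrightarrow> bounded_linear T \<and> (\<forall>c x. T (scaleC c x) = scaleC c (T x))"

definition BH :: "('a::complex_hilbert \<Rightarrow> 'a) set" where
  "BH = {T. bop T}"

text \<open>X is the Douglas solution of A = B X: B X = A and ran X \<subseteq> (ker B)^\<bottom>.\<close>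
definition douglas_sol :: "('a::complex_hilbert \<Rightarrow> 'a) \<Rightarrow> ('a \<Rightarrow> 'a) \<Rightarrow> ('a \<Rightarrow> 'a) \<Rightarrow> bool" where
  "douglas_sol A B X \<longleftrightarrow> bop X \<and> B \<circ> X = A \<and> (\<forall>x y. B y = 0 \<longrightarrow> cinner (X x) y = 0)"

definition orth_proj :: "('a::complex_hilbert \<Rightarrow> 'a) \<Rightarrow> bool" where
  "orth_proj P \<longleftrightarrow> bop P \<and> P \<circ> P = P \<and> (\<forall>x y. cinner (P x) y = cinner x (P y))"

end

theory Submission
  imports Defs
begin

lemma cinner_zero_left: "cinner (0::'a::complex_hilbert) z = 0"
proof -
  have "cinner (0+0::'a) z = cinner 0 z + cinner 0 z" by (rule cinner_add_left)
  thus ?thesis by simp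
qed

lemma cinner_zero_right: "cinner (z::'a::complex_hilbert) 0 = 0"
proof -
  have "cinner z 0 = cnj (cinner 0 z)" by (rule cinner_commute)
  thus ?thesis by (simp add: cinner_zero_left)
qed

lemma cinner_diff_left: "cinner ((x::'a::complex_hilbert) - y) z = cinner x z - cinner y z"
proof -
  have "cinner ((x - y) + y) z = cinner (x-y) z + cinner y z" by (rule cinner_add_left)
  thus ?thesis by simp
qed

lemma cinner_add_right: "cinner (z::'a::complex_hilbert) (x + y) = cinner z x + cinner z y"
proof -
  have "cinner z (x + y) = cnj (cinner (x+y) z)" by (rule cinner_commute)
  also have "\<dots> = cnj (cinner x z) + cnj (cinner y z)" by (simp add: cinner_add_left)
  also have "\<dots> = cinner z x + cinner z y" by (simp add: cinner_commute[of z x] cinner_commute[of z y])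
  finally show ?thesis .
qed

lemma proj_to_dsol:
  assumes "orth_proj (P::'a::complex_hilbert \<Rightarrow> 'a)" shows "douglas_sol P P P"
  using assms unfolding orth_proj_def douglas_sol_def
  by (auto simp: cinner_zero_right)

lemma dsol_to_proj:
  assumes "douglas_sol (Q::'a::complex_hilbert \<Rightarrow> 'a) Q Q" shows "orth_proj Q"
proof -
  have b: "bop Q" and qq: "Q \<circ> Q = Q" and k: "\<And>x y. Q y = 0 \<Longrightarrow> cinner (Q x) y = 0"
    using assms unfolding douglas_sol_def by auto
  have lin: "linear Q" using b unfolding bop_def by (simp add: bounded_linear.linear)
  have qqx: "Q (Q x) = Q x" for x using qq by (metis comp_apply)
  have ker: "Q (x - Q x) = 0" for x using lin qqx by (simp add: linear_diff)
  have "cinner (Q x) y = cinner x (Q y)" for x y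
  proof -
    have e1: "cinner (Q x) y = cinner (Q x) (Q y)"
    proof -
      have "cinner (Q x) (Q y + (y - Q y)) = cinner (Q x) (Q y) + cinner (Q x) (y - Q y)"
        by (rule cinner_add_right)
      hence "cinner (Q x) y = cinner (Q x) (Q y) + cinner (Q x) (y - Q y)"
        by simp
      thus ?thesis using k[OF ker[of y]] by simp
    qed
    have e2: "cinner x (Q y) = cinner (Q x) (Q y)"
    proof -
      have "cinner (Q x + (x - Q x)) (Q y) = cinner (Q x) (Q y) + cinner (x - Q x) (Q y)"
        by (rule cinner_add_left)
      hence "cinner x (Q y) = cinner (Q x) (Q y) + cinner (x - Q x) (Q y)"
        by simp
      moreover have "cinner (x - Q x) (Q y) = cnj (cinner (Q y) (x - Q x))"
        by (rule cinner_commute)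
      ultimately show ?thesis using k[OF ker[of x]] by simp
    qed
    show ?thesis using e1 e2 by simp
  qed
  thus ?thesis using b qq unfolding orth_proj_def by auto
qed

theorem claim3:
  fixes \<phi> :: "('a::complex_hilbert \<Rightarrow> 'a) \<Rightarrow> ('a \<Rightarrow> 'a)"
  assumes "infinite_dim TYPE('a)"
    and "bij_betw \<phi> BH BH"
    and "\<forall>A\<in>BH. \<forall>B\<in>BH. \<forall>X\<in>BH.
           douglas_sol A B X \<longleftrightarrow> douglas_sol (\<phi> A) (\<phi> B) (\<phi> X)"
    and "P \<in> BH" and "orth_proj P"
  shows "orth_proj (\<phi> P)"
proof -
  have "douglas_sol P P P" using assms(5) by (rule proj_to_dsol)
  hence "douglas_sol (\<phi> P) (\<phi> P) (\<phi> P)" using assms(3,4) by blast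
  thus ?thesis by (rule dsol_to_proj)
qed

end
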